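(* Let $\ell(z)=\log(1+\exp(-z))$. For a data point $z=(x,y)\in\mathbb{R}^d\times\{-1,+1\}$, a norm $\|\cdot\|$ on $\mathbb{R}^d$ and $c>0$, define $$R_z(w)=\max_{\|r\|\le c}\ell\big(y\,w^\top(x+r)\big)-\ell\big(y\,w^\top x\big),\qquad w\in\mathbb{R}^d.$$ Then $R_z$ is in general not convex: there exist $d$, $c>0$ and $z$ such that $R_z$ is not a convex function of $w$. *)

theory Defs
  imports "HOL-Analysis.Analysis"
begin

text \<open>R^d is represented as real-valued functions on nat vanishing outside {..<d}.\<close>

definition rvec :: "nat \<Rightarrow> (nat \<Rightarrow> real) set" where
  "rvec d = {v. \<forall>i\<ge>d. v i = 0}"

definition dotp :: "nat \<Rightarrow> (nat \<Rightarrow> real) \<Rightarrow> (nat \<Rightarrow> real) \<Rightarrow> real" where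
  "dotp d w v = (\<Sum>i<d. w i * v i)"

definition is_norm_on :: "nat \<Rightarrow> ((nat \<Rightarrow> real) \<Rightarrow> real) \<Rightarrow> bool" where
  "is_norm_on d N \<longleftrightarrow>
     (\<forall>v\<in>rvec d. 0 \<le> N v \<and> (N v = 0 \<longleftrightarrow> v = (\<lambda>_. 0))) \<and>
     (\<forall>a v. v \<in> rvec d \<longrightarrow> N (\<lambda>i. a * v i) = \<bar>a\<bar> * N v) \<and>
     (\<forall>u\<in>rvec d. \<forall>v\<in>rvec d. N (\<lambda>i. u i + v i) \<le> N u + N v)"

definition lloss :: "real \<Rightarrow> real" where
  "lloss z = ln (1 + exp (- z))"

definition Rz :: "nat \<Rightarrow> ((nat \<Rightarrow> real) \<Rightarrow> real) \<Rightarrow> real \<Rightarrow> (nat \<Rightarrow> real) \<Rightarrow> real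
                  \<Rightarrow> (nat \<Rightarrow> real) \<Rightarrow> real" where
  "Rz d N c x y w =
     (SUP r\<in>{r\<in>rvec d. N r \<le> c}. lloss (y * dotp d w (\<lambda>i. x i + r i)))
     - lloss (y * dotp d w x)"

definition convex_fun_on :: "nat \<Rightarrow> ((nat \<Rightarrow> real) \<Rightarrow> real) \<Rightarrow> bool" where
  "convex_fun_on d f \<longleftrightarrow>
     (\<forall>u\<in>rvec d. \<forall>v\<in>rvec d. \<forall>t::real. 0 \<le> t \<and> t \<le> 1 \<longrightarrow>
        f (\<lambda>i. (1 - t) * u i + t * v i) \<le> (1 - t) * f u + t * f v)"

end

theory Submission
  imports Defs
begin

definition wv :: "real \<Rightarrow> nat \<Rightarrow> real" where
  "wv a = (\<lambda>i. if i = 0 then a else 0)"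

lemma wv_rvec: "wv a \<in> rvec 1"
  by (simp add: wv_def rvec_def)

lemma rvec1_eq: "r \<in> rvec 1 \<Longrightarrow> r = (\<lambda>i. r 0 * wv 1 i)"
  by (auto simp: rvec_def wv_def fun_eq_iff)

lemma lloss_mono: "a \<le> b \<Longrightarrow> lloss b \<le> lloss a"
  unfolding lloss_def by (simp add: add_pos_pos)

lemma Rz_val:
  assumes N: "is_norm_on 1 N" and a: "a \<ge> 0"
  shows "Rz 1 N (N (wv 1)) (wv 1) 1 (wv a) = ln 2 - lloss a"
proof -
  have e1: "wv 1 \<in> rvec 1" by (rule wv_rvec)
  have pos: "N (wv 1) > 0"
  proof -
    have "wv 1 \<noteq> (\<lambda>_. 0)" by (auto simp: wv_def fun_eq_iff)
    with N e1 show ?thesis unfolding is_norm_on_def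
      by (metis less_eq_real_def)
  qed
  have Nr: "N r = \<bar>r 0\<bar> * N (wv 1)" if "r \<in> rvec 1" for r
  proof -
    have "N r = N (\<lambda>i. r 0 * wv 1 i)" using rvec1_eq[OF that] by simp
    also have "\<dots> = \<bar>r 0\<bar> * N (wv 1)" using N e1 unfolding is_norm_on_def by blast
    finally show ?thesis .
  qed
  define S where "S = {r\<in>rvec 1. N r \<le> N (wv 1)}"
  define f where "f = (\<lambda>r. lloss (1 * dotp 1 (wv a) (\<lambda>i. wv 1 i + r i)))"
  have fr: "f r = lloss (a * (1 + r 0))" for r
    by (simp add: f_def dotp_def wv_def)
  have m: "wv (-1) \<in> S"
  proof -
    have "wv (-1) = (\<lambda>i. (-1) * wv 1 i)" by (auto simp: wv_def fun_eq_iff)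
    moreover have "N (\<lambda>i. (-1) * wv 1 i) = \<bar>-1\<bar> * N (wv 1)"
      using N e1 unfolding is_norm_on_def by blast
    ultimately have "N (wv (-1)) = N (wv 1)" by simp
    thus ?thesis using wv_rvec unfolding S_def by simp
  qed
  have bnd: "f r \<le> lloss 0" if "r \<in> S" for r
  proof -
    from that have "r \<in> rvec 1" "\<bar>r 0\<bar> * N (wv 1) \<le> 1 * N (wv 1)"
      unfolding S_def using Nr by auto
    hence "\<bar>r 0\<bar> \<le> 1" using pos by (meson mult_le_cancel_right_pos)
    hence "0 \<le> a * (1 + r 0)" using a by simp
    thus ?thesis unfolding fr by (rule lloss_mono)
  qed
  have fm: "f (wv (-1)) = lloss 0" by (simp add: fr wv_def)
  have "(SUP r\<in>S. f r) = lloss 0"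
  proof (rule cSup_eq_maximum)
    show "lloss 0 \<in> f ` S" using m fm by (metis image_eqI)
    show "\<And>x. x \<in> f ` S \<Longrightarrow> x \<le> lloss 0" using bnd by blast
  qed
  moreover have "lloss 0 = ln 2" by (simp add: lloss_def)
  moreover have "lloss (1 * dotp 1 (wv a) (wv 1)) = lloss a"
    by (simp add: dotp_def wv_def)
  ultimately show ?thesis unfolding Rz_def S_def f_def by simp
qed

lemma key: "ln 2 - lloss 1 > (1/2) * (ln 2 - lloss 0) + (1/2) * (ln 2 - lloss 2)"
proof -
  define b where "b = exp (-1::real)"
  have b: "0 < b" "b < 1" unfolding b_def by auto
  have e2: "exp (-2::real) = b^2"
    unfolding b_def by (simp add: power2_eq_square flip: exp_add)
  have "(1+b)^2 < 2*(1+b^2)"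
  proof -
    have "0 < (1-b)^2" using b by simp
    thus ?thesis by (simp add: power2_eq_square algebra_simps)
  qed
  hence "ln ((1+b)^2) < ln (2*(1+b^2))"
    using b by (intro ln_less_cancel_iff[THEN iffD2]) (auto intro: add_pos_nonneg)
  hence "2 * ln (1+b) < ln 2 + ln (1+b^2)"
  proof -
    have "ln (2*(1+b^2)) = ln 2 + ln (1+b^2)"
    proof -
      have "1 + b^2 > 0" by (simp add: add_pos_nonneg)
      thus ?thesis using ln_mult[of 2 "1+b^2"] by (simp only: if_True) simp
    qed
    moreover have "ln ((1+b)^2) = 2 * ln (1+b)" using b by (simp add: ln_realpow)
    ultimately show ?thesis using \<open>ln ((1+b)^2) < ln (2*(1+b^2))\<close> by linarith
  qed
  thus ?thesis unfolding lloss_def using e2 b_def by simp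
qed

theorem proposition5:
  shows "\<exists>d::nat. \<forall>N. is_norm_on d N \<longrightarrow>
           (\<exists>c::real. c > 0 \<and> (\<exists>x\<in>rvec d. \<exists>y\<in>{-1, 1::real}.
              \<not> convex_fun_on d (Rz d N c x y)))"
proof (rule exI[of _ 1], intro allI impI)
  fix N assume N: "is_norm_on 1 N"
  have pos: "N (wv 1) > 0"
  proof -
    have "wv 1 \<noteq> (\<lambda>_. 0)" by (auto simp: wv_def fun_eq_iff)
    with N wv_rvec show ?thesis unfolding is_norm_on_def
      by (metis less_eq_real_def)
  qed
  have mid: "(\<lambda>i. (1 - 1/2) * wv 0 i + 1/2 * wv 2 i) = wv 1"
    by (auto simp: wv_def fun_eq_iff)
  have "\<not> convex_fun_on 1 (Rz 1 N (N (wv 1)) (wv 1) 1)"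
  proof
    assume "convex_fun_on 1 (Rz 1 N (N (wv 1)) (wv 1) 1)"
    hence "Rz 1 N (N (wv 1)) (wv 1) 1 (\<lambda>i. (1 - 1/2) * wv 0 i + 1/2 * wv 2 i)
       \<le> (1 - 1/2) * Rz 1 N (N (wv 1)) (wv 1) 1 (wv 0) + 1/2 * Rz 1 N (N (wv 1)) (wv 1) 1 (wv 2)"
      unfolding convex_fun_on_def
      apply -
      apply (drule bspec[OF _ wv_rvec[of 0]])
      apply (drule bspec[OF _ wv_rvec[of 2]])
      apply (drule spec[of _ "1/2"])
      by simp
    hence "ln 2 - lloss 1 \<le> (1/2) * (ln 2 - lloss 0) + (1/2) * (ln 2 - lloss 2)"
      unfolding mid using Rz_val[OF N] by simp
    with key show False by linarith
  qed
  thus "\<exists>c::real. c > 0 \<and> (\<exists>x\<in>rvec 1. \<exists>y\<in>{-1, 1::real}.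
              \<not> convex_fun_on 1 (Rz 1 N c x y))"
    using pos wv_rvec[of 1] by (intro exI[of _ "N (wv 1)"]) auto
qed

end
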